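(* Let $\lambda>0$, $L_x,L_y>0$, $K_x=L_x/\lambda$, $K_y=L_y/\lambda$, let $\alpha_1,\alpha_2\in[-1,1]$, let $C\neq 0$ be a complex constant, and let $P>0$, $\sigma^2>0$. Define, for $(\beta_1,\beta_2)\in[-1,1]^2$, $$H(\beta_1,\beta_2)=C\,\mathrm{sinc}\big(K_x\pi(\alpha_1-\beta_1)\big)\,\mathrm{sinc}\big(K_y\pi(\alpha_2-\beta_2)\big),\qquad \mu(\beta_1,\beta_2)=\big|\sqrt{P}\,H(\beta_1,\beta_2)\big|^2+\sigma^2 .$$ Let $(\beta_1^0,\beta_2^0)\in[-1,1]^2$ and let $v,w>0$ satisfy $K_xv\in\mathbb{N}$, $K_yw\in\mathbb{N}$, $|\beta_1^0\pm v|\le 1$ and $|\beta_2^0\pm w|\le 1$. Suppose the five values $\mu(\beta_1^0,\beta_2^0)$, $\mu(\beta_1^0+v,\beta_2^0)$, $\mu(\beta_1^0-v,\beta_2^0)$, $\mu(\beta_1^0,\beta_2^0+w)$, $\mu(\beta_1^0,\beta_2^0-w)$ are known. Define $$\alpha_1^{(1)/(2)}=\beta_1^0+\frac{v}{1\pm\sqrt{\left|\frac{\mu(\beta_1^0,\beta_2^0)-\sigma^2}{\mu(\beta_1^0+v,\beta_2^0)-\sigma^2}\right|}},\qquad \alpha_1^{(3)/(4)}=\beta_1^0-\frac{v}{1\pm\sqrt{\left|\frac{\mu(\beta_1^0,\beta_2^0)-\sigma^2}{\mu(\beta_1^0-v,\beta_2^0)-\sigma^2}\right|}},$$ $$\alpha_2^{(1)/(2)}=\beta_2^0+\frac{w}{1\pm\sqrt{\left|\frac{\mu(\beta_1^0,\beta_2^0)-\sigma^2}{\mu(\beta_1^0,\beta_2^0+w)-\sigma^2}\right|}},\qquad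 \alpha_2^{(3)/(4)}=\beta_2^0-\frac{w}{1\pm\sqrt{\left|\frac{\mu(\beta_1^0,\beta_2^0)-\sigma^2}{\mu(\beta_1^0,\beta_2^0-w)-\sigma^2}\right|}},$$ where the superscript $(1)$ (resp. $(3)$) corresponds to the sign $+$ and $(2)$ (resp. $(4)$) to the sign $-$ in the denominator. Then the maximizer $(\beta_1^*,\beta_2^* )=\arg\max_{(\beta_1,\beta_2)\in[-1,1]^2}\mu(\beta_1,\beta_2)$ is given by $$\beta_1^*=\frac{\alpha_1^{(i)}+\alpha_1^{(j)}}{2}\ \text{ where }(i,j)\in\{1,2\}\times\{3,4\}\text{ minimizes }|\alpha_1^{(i)}-\alpha_1^{(j)}|,$$ $$\beta_2^*=\frac{\alpha_2^{(i)}+\alpha_2^{(j)}}{2}\ \text{ where }(i,j)\in\{1,2\}\times\{3,4\}\text{ minimizes }|\alpha_2^{(i)}-\alpha_2^{(j)}|.$$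
   Context: $\mathrm{sinc}(x)=\sin(x)/x$ (with $\mathrm{sinc}(0)=1$) and $\mathbb{N}$ denotes the natural numbers. This models the far-field channel $H$ between a holographic metasurface transceiver of size $L_x\times L_y$ (carrier wavelength $\lambda$) and a user, where $(\beta_1,\beta_2)$ are the phase-shift parameters at the surface and $\alpha_1=\sin\theta\cos\phi$, $\alpha_2=\sin\theta\sin\phi$ encode the (unknown) user direction; $\mu(\beta_1,\beta_2)$ is the expected received power $\mathbb{E}|\sqrt{P}H(\beta_1,\beta_2)+\zeta|^2$ when a pilot of power $P$ is sent and $\zeta$ is zero-mean complex Gaussian noise of variance $\sigma^2$. *)

theory Defs
  imports Complex_Main
begin

definition sinc :: "real \<Rightarrow> real" where
  "sinc x = (if x = 0 then 1 else sin x / x)"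

definition chanH :: "real \<Rightarrow> real \<Rightarrow> real \<Rightarrow> real \<Rightarrow> real \<Rightarrow> complex \<Rightarrow> real \<Rightarrow> real \<Rightarrow> complex" where
  "chanH lam Lx Ly a1 a2 C b1 b2 =
     C * complex_of_real (sinc ((Lx / lam) * pi * (a1 - b1)))
       * complex_of_real (sinc ((Ly / lam) * pi * (a2 - b2)))"

definition mu :: "real \<Rightarrow> real \<Rightarrow> real \<Rightarrow> real \<Rightarrow> real \<Rightarrow> complex \<Rightarrow> real \<Rightarrow> real \<Rightarrow> real \<Rightarrow> real \<Rightarrow> real" where
  "mu lam Lx Ly a1 a2 C P sigma2 b1 b2 =
     (cmod (complex_of_real (sqrt P) * chanH lam Lx Ly a1 a2 C b1 b2))^2 + sigma2"

text \<open>Candidate estimates alpha^(i), i = 1..4, of one coordinate, given the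
  centre b0, the step v, and the noise-removed powers m0 = mu(centre) - sigma^2,
  mp = mu(centre + step) - sigma^2, mm = mu(centre - step) - sigma^2.
  (1)/(2): b0 + v/(1 +- sqrt|m0/mp|);  (3)/(4): b0 - v/(1 +- sqrt|m0/mm|).\<close>
definition cand :: "real \<Rightarrow> real \<Rightarrow> real \<Rightarrow> real \<Rightarrow> real \<Rightarrow> nat \<Rightarrow> real" where
  "cand b0 v m0 mp mm i =
     (if i = 1 then b0 + v / (1 + sqrt \<bar>m0 / mp\<bar>)
      else if i = 2 then b0 + v / (1 - sqrt \<bar>m0 / mp\<bar>)
      else if i = 3 then b0 - v / (1 + sqrt \<bar>m0 / mm\<bar>)
      else b0 - v / (1 - sqrt \<bar>m0 / mm\<bar>))"

definition min_pair :: "(nat \<Rightarrow> real) \<Rightarrow> nat \<Rightarrow> nat \<Rightarrow> bool" where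
  "min_pair a i j \<longleftrightarrow> (i, j) \<in> {1,2} \<times> {3,4} \<and>
     (\<forall>(i', j') \<in> {1,2} \<times> {3,4}. \<bar>a i - a j\<bar> \<le> \<bar>a i' - a j'\<bar>)"

end

theory Submission
  imports Defs
begin

lemma sin_lt_pos: fixes x :: real assumes "x > 0" shows "\<bar>sin x\<bar> < x"
proof (cases "x > 1")
  case True
  then show ?thesis using abs_sin_le_one[of x] by linarith
next
  case False
  have "x < pi" using False pi_ge_two by linarith
  then have sp: "sin x > 0" using assms sin_gt_zero by blast
  obtain z where z: "0 < z" "z < x" "sin x - sin 0 = (x - 0) * cos z"
    using MVT2[of 0 x sin cos] assms by (auto intro: DERIV_sin)
  have "cos z < cos 0"
    using cos_mono_less_eq[of z 0] z \<open>x < pi\<close> by auto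
  then have "sin x < x" using z assms by (simp add: mult_strict_left_mono[of "cos z" 1 x, simplified])
  then show ?thesis using sp by simp
qed

lemma abs_sin_lt: fixes x :: real assumes "x \<noteq> 0" shows "\<bar>sin x\<bar> < \<bar>x\<bar>"
proof (cases "x > 0")
  case True then show ?thesis using sin_lt_pos by simp
next
  case False
  then have "-x > 0" using assms by simp
  then show ?thesis using sin_lt_pos[of "-x"] False by simp
qed

lemma sinc0: "sinc 0 = 1" by (simp add: sinc_def)

lemma sinc_sq_le: "(sinc x)^2 \<le> 1"
proof (cases "x = 0")
  case False
  have "\<bar>sin x / x\<bar> \<le> 1" using abs_sin_x_le_abs_x[of x] False by (simp add: abs_divide divide_le_eq_1)
  then have "\<bar>sinc x\<bar> \<le> 1" using False by (simp add: sinc_def)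
  then show ?thesis by (simp add: abs_le_square_iff[of _ 1, simplified])
qed (simp add: sinc_def)

lemma sinc_sq_eq1: assumes "(sinc x)^2 = 1" shows "x = 0"
proof (rule ccontr)
  assume "x \<noteq> 0"
  have "\<bar>sin x / x\<bar> < 1" using abs_sin_lt[OF \<open>x \<noteq> 0\<close>] \<open>x \<noteq> 0\<close> by (simp add: abs_divide)
  then have "\<bar>sinc x\<bar> < 1" using \<open>x \<noteq> 0\<close> by (simp add: sinc_def)
  then have "(sinc x)^2 < 1" by (simp add: abs_square_less_1)
  then show False using assms by simp
qed

lemma key1:
  fixes K v c a b0 :: real and i j :: nat
  assumes K: "K > 0" and v: "v > 0" and Kv: "K * v \<in> \<nat>" and c: "c \<ge> 0"
    and fp: "c * (sinc (K * pi * (a - (b0 + v))))^2 \<noteq> 0"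
    and fm: "c * (sinc (K * pi * (a - (b0 - v))))^2 \<noteq> 0"
    and mp: "min_pair (cand b0 v (c * (sinc (K * pi * (a - b0)))^2)
                 (c * (sinc (K * pi * (a - (b0 + v))))^2)
                 (c * (sinc (K * pi * (a - (b0 - v))))^2)) i j"
  shows "(cand b0 v (c * (sinc (K * pi * (a - b0)))^2)
                 (c * (sinc (K * pi * (a - (b0 + v))))^2)
                 (c * (sinc (K * pi * (a - (b0 - v))))^2) i +
          cand b0 v (c * (sinc (K * pi * (a - b0)))^2)
                 (c * (sinc (K * pi * (a - (b0 + v))))^2)
                 (c * (sinc (K * pi * (a - (b0 - v))))^2) j) / 2 = a"
proof -
  obtain n :: nat where n: "K * v = real n" using Kv Nats_cases by metis
  have npos: "real n > 0" using n K v by (metis mult_pos_pos)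
  define t where "t = a - b0"
  define u where "u = K * pi * t"
  have e1: "K * pi * (a - (b0 + v)) = u - real n * pi" unfolding u_def t_def using n
    by (simp add: algebra_simps)
  have e2: "K * pi * (a - (b0 - v)) = u + real n * pi" unfolding u_def t_def using n
    by (simp add: algebra_simps)
  have e0: "K * pi * (a - b0) = u" unfolding u_def t_def by simp
  have s1: "sin (u - real n * pi) = (-1)^n * sin u" by (simp add: sin_diff)
  have s2: "sin (u + real n * pi) = (-1)^n * sin u" by (simp add: sin_add)
  have m1: "((-1::real)^n)^2 = 1" by (induct n) (auto simp: power2_eq_square)
  have c0: "c \<noteq> 0" using fp by auto
  have sp: "sinc (u - real n * pi) \<noteq> 0" using fp e1 by auto
  have sm: "sinc (u + real n * pi) \<noteq> 0" using fm e2 by auto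
  have su: "sin u \<noteq> 0"
  proof
    assume "sin u = 0"
    then have "u - real n * pi = 0" "u + real n * pi = 0" using sp sm s1 s2
      by (auto simp: sinc_def split: if_splits)
    then show False using npos by simp
  qed
  have u0: "u \<noteq> 0" using su by auto
  have up: "u - real n * pi \<noteq> 0" using su s1 by auto
  have um: "u + real n * pi \<noteq> 0" using su s2 by auto
  have Kp: "K * pi > 0" using K by simp
  have t0: "t \<noteq> 0" using u0 u_def by auto
  have nv: "real n * pi = K * pi * v" using n by simp
  have tv1: "t \<noteq> v" using up nv u_def by auto
  have tv2: "t \<noteq> -v" using um nv u_def by (auto simp: algebra_simps)
  have r1: "sqrt \<bar>(c * (sinc (K * pi * (a - b0)))^2) / (c * (sinc (K * pi * (a - (b0 + v))))^2)\<bar>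
      = \<bar>t - v\<bar> / \<bar>t\<bar>"
  proof -
    have "(c * (sinc (K * pi * (a - b0)))^2) / (c * (sinc (K * pi * (a - (b0 + v))))^2)
        = (u - real n * pi)^2 / u^2"
      unfolding e0 e1 sinc_def using u0 up c0 su s1 m1 by (simp add: field_simps power_mult_distrib)
    also have "\<dots> = (t - v)^2 / t^2" unfolding u_def nv using Kp K
      by (simp add: right_diff_distrib[symmetric] power_mult_distrib del: right_diff_distrib)
    finally show ?thesis by (simp add: real_sqrt_divide)
  qed
  have r2: "sqrt \<bar>(c * (sinc (K * pi * (a - b0)))^2) / (c * (sinc (K * pi * (a - (b0 - v))))^2)\<bar>
      = \<bar>t + v\<bar> / \<bar>t\<bar>"
  proof -
    have "(c * (sinc (K * pi * (a - b0)))^2) / (c * (sinc (K * pi * (a - (b0 - v))))^2)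
        = (u + real n * pi)^2 / u^2"
      unfolding e0 e2 sinc_def using u0 um c0 su s2 m1 by (simp add: field_simps power_mult_distrib)
    also have "\<dots> = (t + v)^2 / t^2" unfolding u_def nv using Kp K
      by (simp add: distrib_left[symmetric] power_mult_distrib del: distrib_left)
    finally show ?thesis by (simp add: real_sqrt_divide)
  qed
  define A where "A = cand b0 v (c * (sinc (K * pi * (a - b0)))^2)
                 (c * (sinc (K * pi * (a - (b0 + v))))^2)
                 (c * (sinc (K * pi * (a - (b0 - v))))^2)"
  have A1: "A 1 = b0 + v / (1 + \<bar>t - v\<bar> / \<bar>t\<bar>)" unfolding A_def cand_def r1 by simp
  have A2: "A 2 = b0 + v / (1 - \<bar>t - v\<bar> / \<bar>t\<bar>)" unfolding A_def cand_def r1 by simp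
  have A3: "A 3 = b0 - v / (1 + \<bar>t + v\<bar> / \<bar>t\<bar>)" unfolding A_def cand_def r2 by simp
  have A4: "A 4 = b0 - v / (1 - \<bar>t + v\<bar> / \<bar>t\<bar>)" unfolding A_def cand_def r2 by simp
  define Sp where "Sp = b0 + v * t / (2 * t - v)"
  define Sm where "Sm = b0 - v * t / (2 * t + v)"
  have a_eq: "a = b0 + t" unfolding t_def by simp
  have P12: "(A 1 = a \<and> A 2 = Sp) \<or> (A 1 = Sp \<and> A 2 = a)"
  proof -
    consider "t < 0" | "0 < t \<and> t < v" | "v < t" using t0 tv1 by linarith
    then show ?thesis
    proof cases
      case 1
      have x1: "1 + \<bar>t - v\<bar> / \<bar>t\<bar> = (2 * t - v) / t" using 1 v by (simp add: field_simps abs_if)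
      have x2: "1 - \<bar>t - v\<bar> / \<bar>t\<bar> = v / t" using 1 v by (simp add: field_simps abs_if)
      show ?thesis using x1 x2 A1 A2 t0 v unfolding Sp_def a_eq by simp
    next
      case 2
      have x1: "1 + \<bar>t - v\<bar> / \<bar>t\<bar> = v / t" using 2 v by (simp add: field_simps abs_if)
      have x2: "1 - \<bar>t - v\<bar> / \<bar>t\<bar> = (2 * t - v) / t" using 2 v by (simp add: field_simps abs_if)
      show ?thesis using x1 x2 A1 A2 t0 v unfolding Sp_def a_eq by simp
    next
      case 3
      have x1: "1 + \<bar>t - v\<bar> / \<bar>t\<bar> = (2 * t - v) / t" using 3 v by (simp add: field_simps abs_if)
      have x2: "1 - \<bar>t - v\<bar> / \<bar>t\<bar> = v / t" using 3 v by (simp add: field_simps abs_if)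
      show ?thesis using x1 x2 A1 A2 t0 v unfolding Sp_def a_eq by simp
    qed
  qed
  have P34: "(A 3 = a \<and> A 4 = Sm) \<or> (A 3 = Sm \<and> A 4 = a)"
  proof -
    consider "t < -v" | "-v < t \<and> t < 0" | "0 < t" using t0 tv2 by linarith
    then show ?thesis
    proof cases
      case 1
      have x1: "1 + \<bar>t + v\<bar> / \<bar>t\<bar> = (2 * t + v) / t" using 1 v by (simp add: field_simps abs_if)
      have x2: "1 - \<bar>t + v\<bar> / \<bar>t\<bar> = - v / t" using 1 v by (simp add: field_simps abs_if)
      show ?thesis using x1 x2 A3 A4 t0 v unfolding Sm_def a_eq by simp
    next
      case 2
      have x1: "1 + \<bar>t + v\<bar> / \<bar>t\<bar> = - v / t" using 2 v by (simp add: field_simps abs_if)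
      have x2: "1 - \<bar>t + v\<bar> / \<bar>t\<bar> = (2 * t + v) / t" using 2 v by (simp add: field_simps abs_if)
      show ?thesis using x1 x2 A3 A4 t0 v unfolding Sm_def a_eq by simp
    next
      case 3
      have x1: "1 + \<bar>t + v\<bar> / \<bar>t\<bar> = (2 * t + v) / t" using 3 v by (simp add: field_simps abs_if)
      have x2: "1 - \<bar>t + v\<bar> / \<bar>t\<bar> = - v / t" using 3 v by (simp add: field_simps abs_if)
      show ?thesis using x1 x2 A3 A4 t0 v unfolding Sm_def a_eq by simp
    qed
  qed
  have Spa: "Sp \<noteq> a"
  proof
    assume h: "Sp = a"
    show False
    proof (cases "2 * t - v = 0")
      case True then show ?thesis using h t0 unfolding Sp_def a_eq by simp
    next
      case False then show ?thesis using h t0 tv1 v unfolding Sp_def a_eq by (simp add: field_simps)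
    qed
  qed
  have Sma: "Sm \<noteq> a"
  proof
    assume h: "Sm = a"
    show False
    proof (cases "2 * t + v = 0")
      case True then show ?thesis using h t0 unfolding Sm_def a_eq by simp
    next
      case False
      have "t * v = t * (-(2*t+v))" using h False unfolding Sm_def a_eq by (simp add: field_simps)
      then have "v = -(2*t+v)" using t0 by simp
      then show ?thesis using tv2 by simp
    qed
  qed
  have SpSm: "Sp \<noteq> Sm"
  proof
    assume h: "Sp = Sm"
    show False
    proof (cases "2 * t - v = 0")
      case True then show ?thesis using h t0 v unfolding Sp_def Sm_def by simp
    next
      case F1: False
      show ?thesis
      proof (cases "2 * t + v = 0")
        case True then show ?thesis using h t0 v unfolding Sp_def Sm_def by simp
      next
        case False then show ?thesis using F1 h t0 v unfolding Sp_def Sm_def by (simp add: field_simps)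
      qed
    qed
  qed
  have ij: "i \<in> {1,2}" "j \<in> {3,4}" and mn: "\<forall>(i', j') \<in> {1,2} \<times> {3,4}. \<bar>A i - A j\<bar> \<le> \<bar>A i' - A j'\<bar>"
    using mp unfolding min_pair_def A_def by auto
  obtain p q where pq: "p \<in> {1,2}" "q \<in> {3,4}" "A p = a" "A q = a" using P12 P34 by blast
  have "\<bar>A i - A j\<bar> \<le> \<bar>A p - A q\<bar>" using mn pq(1,2) by blast
  then have Aij: "A i = A j" using pq by simp
  have "A i \<in> {a, Sp}" using ij P12 by auto
  moreover have "A j \<in> {a, Sm}" using ij P34 by auto
  ultimately have "A i = a" "A j = a" using Aij Spa Sma SpSm by auto
  then show ?thesis unfolding A_def[symmetric] by simp
qed

lemma M_formula:
  assumes "P > 0"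
  shows "mu lam Lx Ly a1 a2 C P sigma2 x y =
    P * (cmod C)^2 * (sinc ((Lx / lam) * pi * (a1 - x)))^2 * (sinc ((Ly / lam) * pi * (a2 - y)))^2 + sigma2"
  using assms unfolding mu_def chanH_def by (simp add: norm_mult power_mult_distrib)

theorem theorem1:
  fixes lam Lx Ly a1 a2 P sigma2 b10 b20 v w :: real and C :: complex
    and i1 j1 i2 j2 :: nat
  defines "M \<equiv> mu lam Lx Ly a1 a2 C P sigma2"
  assumes "lam > 0" "Lx > 0" "Ly > 0"
    and "a1 \<in> {-1..1}" "a2 \<in> {-1..1}"
    and "C \<noteq> 0" "P > 0" "sigma2 > 0"
    and "b10 \<in> {-1..1}" "b20 \<in> {-1..1}"
    and "v > 0" "w > 0"
    and "(Lx / lam) * v \<in> \<nat>" "(Ly / lam) * w \<in> \<nat>"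
    and "\<bar>b10 + v\<bar> \<le> 1" "\<bar>b10 - v\<bar> \<le> 1"
    and "\<bar>b20 + w\<bar> \<le> 1" "\<bar>b20 - w\<bar> \<le> 1"
    and "M (b10 + v) b20 - sigma2 \<noteq> 0" "M (b10 - v) b20 - sigma2 \<noteq> 0"
    and "M b10 (b20 + w) - sigma2 \<noteq> 0" "M b10 (b20 - w) - sigma2 \<noteq> 0"
    and "min_pair (cand b10 v (M b10 b20 - sigma2) (M (b10 + v) b20 - sigma2)
                        (M (b10 - v) b20 - sigma2)) i1 j1"
    and "min_pair (cand b20 w (M b10 b20 - sigma2) (M b10 (b20 + w) - sigma2)
                        (M b10 (b20 - w) - sigma2)) i2 j2"
  shows "let al1 = cand b10 v (M b10 b20 - sigma2) (M (b10 + v) b20 - sigma2)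
                        (M (b10 - v) b20 - sigma2);
             al2 = cand b20 w (M b10 b20 - sigma2) (M b10 (b20 + w) - sigma2)
                        (M b10 (b20 - w) - sigma2);
             s1 = (al1 i1 + al1 j1) / 2;
             s2 = (al2 i2 + al2 j2) / 2
         in s1 \<in> {-1..1} \<and> s2 \<in> {-1..1} \<and>
            (\<forall>x\<in>{-1..1}. \<forall>y\<in>{-1..1}. M x y \<le> M s1 s2) \<and>
            (\<forall>x\<in>{-1..1}. \<forall>y\<in>{-1..1}. M x y = M s1 s2 \<longrightarrow> x = s1 \<and> y = s2)"
proof -
  let ?c = "P * (cmod C)^2"
  have M: "\<And>x y. M x y = ?c * (sinc ((Lx / lam) * pi * (a1 - x)))^2 * (sinc ((Ly / lam) * pi * (a2 - y)))^2 + sigma2"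
    unfolding M_def using M_formula[OF \<open>P > 0\<close>] by simp
  define c1 where "c1 = ?c * (sinc ((Ly / lam) * pi * (a2 - b20)))^2"
  define c2 where "c2 = ?c * (sinc ((Lx / lam) * pi * (a1 - b10)))^2"
  have M1: "\<And>x. M x b20 - sigma2 = c1 * (sinc ((Lx / lam) * pi * (a1 - x)))^2"
    unfolding c1_def M by simp
  have M2: "\<And>y. M b10 y - sigma2 = c2 * (sinc ((Ly / lam) * pi * (a2 - y)))^2"
    unfolding c2_def M by simp
  have c1p: "c1 \<ge> 0" unfolding c1_def using \<open>P > 0\<close> by simp
  have c2p: "c2 \<ge> 0" unfolding c2_def using \<open>P > 0\<close> by simp
  have s1: "(cand b10 v (M b10 b20 - sigma2) (M (b10 + v) b20 - sigma2) (M (b10 - v) b20 - sigma2) i1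
       + cand b10 v (M b10 b20 - sigma2) (M (b10 + v) b20 - sigma2) (M (b10 - v) b20 - sigma2) j1) / 2 = a1"
  proof -
    have fp: "c1 * (sinc ((Lx / lam) * pi * (a1 - (b10 + v))))^2 \<noteq> 0"
      using \<open>M (b10 + v) b20 - sigma2 \<noteq> 0\<close> unfolding M1 .
    have fm: "c1 * (sinc ((Lx / lam) * pi * (a1 - (b10 - v))))^2 \<noteq> 0"
      using \<open>M (b10 - v) b20 - sigma2 \<noteq> 0\<close> unfolding M1 .
    have mp: "min_pair (cand b10 v (c1 * (sinc ((Lx / lam) * pi * (a1 - b10)))^2)
       (c1 * (sinc ((Lx / lam) * pi * (a1 - (b10 + v))))^2)
       (c1 * (sinc ((Lx / lam) * pi * (a1 - (b10 - v))))^2)) i1 j1"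
      using assms(24) unfolding M1 .
    have K: "Lx / lam > 0" using \<open>lam > 0\<close> \<open>Lx > 0\<close> by simp
    show ?thesis unfolding M1 using key1[OF K \<open>v > 0\<close> \<open>(Lx / lam) * v \<in> \<nat>\<close> c1p fp fm mp] .
  qed
  have s2: "(cand b20 w (M b10 b20 - sigma2) (M b10 (b20 + w) - sigma2) (M b10 (b20 - w) - sigma2) i2
       + cand b20 w (M b10 b20 - sigma2) (M b10 (b20 + w) - sigma2) (M b10 (b20 - w) - sigma2) j2) / 2 = a2"
  proof -
    have fp: "c2 * (sinc ((Ly / lam) * pi * (a2 - (b20 + w))))^2 \<noteq> 0"
      using \<open>M b10 (b20 + w) - sigma2 \<noteq> 0\<close> unfolding M2 .
    have fm: "c2 * (sinc ((Ly / lam) * pi * (a2 - (b20 - w))))^2 \<noteq> 0"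
      using \<open>M b10 (b20 - w) - sigma2 \<noteq> 0\<close> unfolding M2 .
    have mp: "min_pair (cand b20 w (c2 * (sinc ((Ly / lam) * pi * (a2 - b20)))^2)
       (c2 * (sinc ((Ly / lam) * pi * (a2 - (b20 + w))))^2)
       (c2 * (sinc ((Ly / lam) * pi * (a2 - (b20 - w))))^2)) i2 j2"
      using assms(25) unfolding M2 .
    have K: "Ly / lam > 0" using \<open>lam > 0\<close> \<open>Ly > 0\<close> by simp
    show ?thesis unfolding M2 using key1[OF K \<open>w > 0\<close> \<open>(Ly / lam) * w \<in> \<nat>\<close> c2p fp fm mp] .
  qed
  have Mmax: "M a1 a2 = ?c + sigma2" unfolding M by (simp add: sinc_def)
  have cpos: "?c > 0" using \<open>P > 0\<close> \<open>C \<noteq> 0\<close> by simp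
  have le: "M x y \<le> M a1 a2" for x y
  proof -
    have "(sinc ((Lx / lam) * pi * (a1 - x)))^2 * (sinc ((Ly / lam) * pi * (a2 - y)))^2 \<le> 1"
      by (rule mult_le_one) (auto simp: sinc_sq_le)
    then have "?c * ((sinc ((Lx / lam) * pi * (a1 - x)))^2 * (sinc ((Ly / lam) * pi * (a2 - y)))^2) \<le> ?c * 1"
      using cpos by (intro mult_left_mono) auto
    then show ?thesis unfolding Mmax M by (simp add: mult.assoc sinc0)
  qed
  have uq: "x = a1 \<and> y = a2" if h: "M x y = M a1 a2" for x y
  proof -
    let ?p = "(sinc ((Lx / lam) * pi * (a1 - x)))^2"
    let ?q = "(sinc ((Ly / lam) * pi * (a2 - y)))^2"
    have "?c * (?p * ?q) = ?c * 1" using h unfolding Mmax M by (simp add: mult.assoc sinc0)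
    then have pq: "?p * ?q = 1" using cpos by auto
    have p1: "?p \<le> 1" "?q \<le> 1" "?p \<ge> 0" "?q \<ge> 0" using sinc_sq_le by auto
    have "?p * ?q \<le> ?p" using p1 by (intro mult_left_le) auto
    then have "?p = 1" using pq p1 by simp
    moreover have "?q = 1" using pq \<open>?p = 1\<close> by simp
    ultimately have "(Lx / lam) * pi * (a1 - x) = 0" "(Ly / lam) * pi * (a2 - y) = 0"
      using sinc_sq_eq1 by blast+
    then show ?thesis using \<open>lam > 0\<close> \<open>Lx > 0\<close> \<open>Ly > 0\<close> by auto
  qed
  show ?thesis unfolding Let_def s1 s2 using \<open>a1 \<in> {-1..1}\<close> \<open>a2 \<in> {-1..1}\<close> le uq by auto
qed

end
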